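(* Let $(\{0,1\}^{\mathbb N},\mathbb B_\Pi(\{0,1\}^{\mathbb N}),m,\sigma)$ be an ergodic Markov shift over two symbols, and let $X:\{0,1\}^{\mathbb N}\to\mathbb R$ be a lexicographic-like random variable. Then for every $d\in\mathbb N$ the ordinal partition $\mathcal P^X(d)$ is generating and has the Markov property.
   Context: Markov shift over $A=\{0,\dots,l\}$: given an $(l+1)\times(l+1)$ stochastic matrix $Q=(q_{ij})$ and a stationary probability vector $p=(p_0,\dots,p_l)$ of $Q$ with all $p_a>0$, it is the system $(A^{\mathbb N},\mathbb B_\Pi(A^{\mathbb N}),m,\sigma)$ where $A^{\mathbb N}$ is the space of one-sided sequences $s=(s_0,s_1,\dots)$, $\mathbb B_\Pi$ is the $\sigma$-algebra generated by cylinders $C_{a_0\dots a_{n-1}}=\{s: s_0=a_0,\dots,s_{n-1}=a_{n-1}\}$, $(\sigma s)_j=s_{j+1}$, and $m(C_{a_0\dots a_{n-1}})=p_{a_0}q_{a_0a_1}\cdots q_{a_{n-2}a_{n-1}}$. It is ergodic if every $B$ with $\sigma^{-1}B=B$ has $m(B)\in\{0,1\}$. Lexicographic order: $r\prec s$ iff $r_0<s_0$ or there is $k\in\mathbb N$ with $r_i=s_i$ for $i<k$ and $r_k<s_k$. An observable $X:A^{\mathbb N}\to\mathbb R$ is lexicographic-like if it is injective on a set of full $m$-measure and for all $s\in A^{\mathbb N}$ and $j,n\in\mathbb N_0$: $X(\sigma^j s)\le X(\sigma^n s)$ iff $\sigma^j s\preceq\sigma^n s$. Ordinal pattern: $(x_0,\dots,x_d)$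 has pattern $\pi=(r_0,\dots,r_d)\in\Pi_d$ (permutations of $\{0,\dots,d\}$) if $x_{r_0}\ge\dots\ge x_{r_d}$ and $r_{l-1}>r_l$ whenever $x_{r_{l-1}}=x_{r_l}$. The ordinal partition $\mathcal P^X(d)$ consists of the sets $P_\pi=\{s:(X(\sigma^d s),X(\sigma^{d-1}s),\dots,X(s))\text{ has ordinal pattern }\pi\}$, $\pi\in\Pi_d$. A finite measurable partition $\mathcal G=\{G_0,\dots,G_l\}$ is generating if for every measurable $B$ there is $A$ in the $\sigma$-algebra generated by the sets $\sigma^{-n}(G_i)$, $n\in\mathbb N_0$, with $m(A\triangle B)=0$. A finite partition $\mathcal M=\{M_0,\dots,M_l\}$ has the Markov property if for all $n\in\mathbb N$ and $i_0,\dots,i_n$ with $m(M_{i_0}\cap\sigma^{-1}M_{i_1}\cap\dots\cap\sigma^{-(n-1)}M_{i_{n-1}})>0$, $\frac{m(M_{i_0}\cap\sigma^{-1}M_{i_1}\cap\dots\cap\sigma^{-n}M_{i_n})}{m(M_{i_0}\cap\dots\cap\sigma^{-(n-1)}M_{i_{n-1}})}=\frac{m(M_{i_{n-1}}\cap\sigma^{-1}M_{i_n})}{m(M_{i_{n-1}})}$. *)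

theory Defs
  imports "HOL-Probability.Probability"
begin

definition seq_space :: "nat \<Rightarrow> (nat \<Rightarrow> nat) set" where
  "seq_space l = {s. \<forall>i. s i \<le> l}"

definition shift :: "(nat \<Rightarrow> 'a) \<Rightarrow> (nat \<Rightarrow> 'a)" where
  "shift s = (\<lambda>j. s (Suc j))"

definition cylinder :: "nat \<Rightarrow> (nat \<Rightarrow> nat) \<Rightarrow> nat \<Rightarrow> (nat \<Rightarrow> nat) set" where
  "cylinder l a n = {s \<in> seq_space l. \<forall>i<n. s i = a i}"

definition markov_shift ::
  "nat \<Rightarrow> (nat \<Rightarrow> nat \<Rightarrow> real) \<Rightarrow> (nat \<Rightarrow> real) \<Rightarrow> (nat \<Rightarrow> nat) measure \<Rightarrow> bool" where
  "markov_shift l Q p M \<longleftrightarrow>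
     (\<forall>i\<le>l. \<forall>j\<le>l. 0 \<le> Q i j) \<and>
     (\<forall>i\<le>l. (\<Sum>j\<le>l. Q i j) = 1) \<and>
     (\<forall>a\<le>l. 0 < p a) \<and>
     (\<Sum>a\<le>l. p a) = 1 \<and>
     (\<forall>j\<le>l. (\<Sum>i\<le>l. p i * Q i j) = p j) \<and>
     prob_space M \<and>
     space M = seq_space l \<and>
     sets M = sigma_sets (seq_space l) {cylinder l a n | a n. True} \<and>
     (\<forall>a n. (\<forall>i<n. a i \<le> l) \<longrightarrow> 1 \<le> n \<longrightarrow>
        measure M (cylinder l a n) = p (a 0) * (\<Prod>i<n - 1. Q (a i) (a (Suc i))))"

definition ergodic_shift :: "(nat \<Rightarrow> 'a) measure \<Rightarrow> bool" where
  "ergodic_shift M \<longleftrightarrow>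
     (\<forall>B\<in>sets M. shift -` B \<inter> space M = B \<longrightarrow> measure M B = 0 \<or> measure M B = 1)"

definition lex_less :: "(nat \<Rightarrow> nat) \<Rightarrow> (nat \<Rightarrow> nat) \<Rightarrow> bool" where
  "lex_less r s \<longleftrightarrow> (\<exists>k. (\<forall>i<k. r i = s i) \<and> r k < s k)"

definition lex_le :: "(nat \<Rightarrow> nat) \<Rightarrow> (nat \<Rightarrow> nat) \<Rightarrow> bool" where
  "lex_le r s \<longleftrightarrow> lex_less r s \<or> r = s"

definition lexicographic_like :: "(nat \<Rightarrow> nat) measure \<Rightarrow> ((nat \<Rightarrow> nat) \<Rightarrow> real) \<Rightarrow> bool" where
  "lexicographic_like M X \<longleftrightarrow>
     (\<exists>N\<in>sets M. measure M N = 1 \<and> inj_on X N) \<and>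
     (\<forall>s\<in>space M. \<forall>j n. X ((shift ^^ j) s) \<le> X ((shift ^^ n) s)
         \<longleftrightarrow> lex_le ((shift ^^ j) s) ((shift ^^ n) s))"

definition patterns :: "nat \<Rightarrow> nat list set" where
  "patterns d = {r. distinct r \<and> set r = {0..d}}"

definition has_pattern :: "(nat \<Rightarrow> real) \<Rightarrow> nat list \<Rightarrow> bool" where
  "has_pattern x r \<longleftrightarrow>
     (\<forall>k. 0 < k \<longrightarrow> k < length r \<longrightarrow>
        x (r ! (k - 1)) \<ge> x (r ! k) \<and>
        (x (r ! (k - 1)) = x (r ! k) \<longrightarrow> r ! (k - 1) > r ! k))"

text \<open>P_pi = {s. (X(shift^d s), ..., X(s)) has ordinal pattern pi}: entry i is X(shift^(d-i) s).\<close>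

definition ordinal_set ::
  "(nat \<Rightarrow> nat) measure \<Rightarrow> ((nat \<Rightarrow> nat) \<Rightarrow> real) \<Rightarrow> nat \<Rightarrow> nat list \<Rightarrow> (nat \<Rightarrow> nat) set" where
  "ordinal_set M X d \<pi> = {s \<in> space M. has_pattern (\<lambda>i. X ((shift ^^ (d - i)) s)) \<pi>}"

definition generating :: "(nat \<Rightarrow> 'a) measure \<Rightarrow> 'i set \<Rightarrow> ('i \<Rightarrow> (nat \<Rightarrow> 'a) set) \<Rightarrow> bool" where
  "generating M I G \<longleftrightarrow>
     (\<forall>B\<in>sets M. \<exists>A\<in>sigma_sets (space M) {(shift ^^ n) -` G i \<inter> space M | n i. i \<in> I}.
        measure M ((A - B) \<union> (B - A)) = 0)"

definition markov_property :: "(nat \<Rightarrow> 'a) measure \<Rightarrow> 'i set \<Rightarrow> ('i \<Rightarrow> (nat \<Rightarrow> 'a) set) \<Rightarrow> bool" where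
  "markov_property M I G \<longleftrightarrow>
     (\<forall>n::nat. 1 \<le> n \<longrightarrow> (\<forall>ix :: nat \<Rightarrow> 'i. (\<forall>k\<le>n. ix k \<in> I) \<longrightarrow>
        0 < measure M (\<Inter>k<n. (shift ^^ k) -` G (ix k) \<inter> space M) \<longrightarrow>
        measure M (\<Inter>k\<le>n. (shift ^^ k) -` G (ix k) \<inter> space M)
          / measure M (\<Inter>k<n. (shift ^^ k) -` G (ix k) \<inter> space M)
        = measure M (G (ix (n - 1)) \<inter> (shift -` G (ix n) \<inter> space M))
          / measure M (G (ix (n - 1)))))"

end

theory Submission
  imports Defs
begin

lemma shift_pow: "(shift ^^ n) s = (\<lambda>j. s (j + n))"
  by (induction n) (auto simp: shift_def)

lemma shift_pow_app: "(shift ^^ n) s j = s (j + n)"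
  by (simp add: shift_pow)

lemma shift_app: "shift s j = s (Suc j)"
  by (simp add: shift_def)

lemma shift_pow_Suc: "(shift ^^ Suc n) s = (shift ^^ n) (shift s)"
  by (simp add: shift_pow shift_def)

lemma shift_pow_add: "(shift ^^ (a + b)) s = (shift ^^ a) ((shift ^^ b) s)"
  by (simp add: shift_pow add.assoc)

lemma seq_space_shift_pow: "s \<in> seq_space l \<Longrightarrow> (shift ^^ n) s \<in> seq_space l"
  by (simp add: seq_space_def shift_pow)

lemma seq_space_shift: "s \<in> seq_space l \<Longrightarrow> shift s \<in> seq_space l"
  by (simp add: seq_space_def shift_def)

lemma lex_less_irrefl: "\<not> lex_less r r"
  by (auto simp: lex_less_def)

lemma lex_less_asym: "lex_less r s \<Longrightarrow> \<not> lex_less s r"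
proof
  assume a: "lex_less r s" "lex_less s r"
  obtain k where k: "\<forall>i<k. r i = s i" "r k < s k" using a(1) unfolding lex_less_def by blast
  obtain k' where k': "\<forall>i<k'. s i = r i" "s k' < r k'" using a(2) unfolding lex_less_def by blast
  show False
  proof (cases k k' rule: linorder_cases)
    case less
    then have "s k = r k" using k'(1) by blast
    then show ?thesis using k(2) by simp
  next
    case equal then show ?thesis using k k' by auto
  next
    case greater
    then have "r k' = s k'" using k(1) by blast
    then show ?thesis using k'(2) by simp
  qed
qed

lemma lex_less_total: "r \<noteq> s \<Longrightarrow> lex_less r s \<or> lex_less s r"
proof -
  assume "r \<noteq> s"
  then have ex: "\<exists>k. r k \<noteq> s k" by auto
  define k where "k = (LEAST k. r k \<noteq> s k)"
  have k: "r k \<noteq> s k" using LeastI_ex[OF ex] k_def by simp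
  have lt: "\<forall>i<k. r i = s i" using not_less_Least k_def by blast
  show ?thesis
  proof (cases "r k < s k")
    case True then show ?thesis using lt unfolding lex_less_def by blast
  next
    case False then have "s k < r k" using k by simp
    then show ?thesis using lt unfolding lex_less_def by (intro disjI2 exI[of _ k]) auto
  qed
qed

lemma not_lex_le_iff: "\<not> lex_le a b \<longleftrightarrow> lex_less b a"
  unfolding lex_le_def
proof
  assume "\<not> (lex_less a b \<or> a = b)" then show "lex_less b a" using lex_less_total by blast
next
  assume "lex_less b a" then show "\<not> (lex_less a b \<or> a = b)"
    using lex_less_asym lex_less_irrefl by blast
qed

lemma lex_less_rec: "lex_less r s \<longleftrightarrow> r 0 < s 0 \<or> (r 0 = s 0 \<and> lex_less (shift r) (shift s))"
proof
  assume "lex_less r s"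
  then obtain k where k: "\<forall>i<k. r i = s i" "r k < s k" unfolding lex_less_def by blast
  show "r 0 < s 0 \<or> (r 0 = s 0 \<and> lex_less (shift r) (shift s))"
  proof (cases k)
    case 0 then show ?thesis using k by simp
  next
    case (Suc j)
    then have "\<forall>i<j. shift r i = shift s i" "shift r j < shift s j"
      using k by (auto simp: shift_def)
    have "r 0 = s 0" using k Suc by auto
    moreover have "lex_less (shift r) (shift s)" unfolding lex_less_def
      using \<open>\<forall>i<j. shift r i = shift s i\<close> \<open>shift r j < shift s j\<close> by blast
    ultimately show ?thesis by simp
  qed
next
  assume "r 0 < s 0 \<or> (r 0 = s 0 \<and> lex_less (shift r) (shift s))"
  then show "lex_less r s"
  proof
    assume "r 0 < s 0" then show ?thesis unfolding lex_less_def by (intro exI[of _ 0]) auto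
  next
    assume a: "r 0 = s 0 \<and> lex_less (shift r) (shift s)"
    then obtain k where k: "\<forall>i<k. shift r i = shift s i" "shift r k < shift s k"
      unfolding lex_less_def by blast
    have "\<forall>i<Suc k. r i = s i"
    proof (intro allI impI)
      fix i assume "i < Suc k"
      then show "r i = s i"
      proof (cases i)
        case 0 then show ?thesis using a by simp
      next
        case (Suc j) then have "j < k" using \<open>i < Suc k\<close> by simp
        then show ?thesis using k(1) Suc by (simp add: shift_def)
      qed
    qed
    moreover have "r (Suc k) < s (Suc k)" using k by (simp add: shift_def)
    ultimately show ?thesis unfolding lex_less_def by blast
  qed
qed

definition nonconst :: "(nat \<Rightarrow> nat) \<Rightarrow> bool" where
  "nonconst r \<longleftrightarrow> (\<exists>i. r i \<noteq> r (Suc i))"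

lemma lex_less_shift_iff:
  assumes "r \<in> seq_space 1" "nonconst r"
  shows "lex_less r (shift r) \<longleftrightarrow> r 0 = 0"
proof -
  have ex: "\<exists>i. r i \<noteq> r (Suc i)" using assms(2) nonconst_def by auto
  define k where "k = (LEAST i. r i \<noteq> r (Suc i))"
  have k: "r k \<noteq> r (Suc k)" using LeastI_ex[OF ex] k_def by simp
  have lt: "\<forall>i<k. r (Suc i) = r i" using not_less_Least k_def by (metis (mono_tags, lifting))
  have eq: "\<forall>i\<le>k. r i = r 0"
  proof (intro allI impI)
    fix i assume "i \<le> k" then show "r i = r 0"
      using lt by (induction i) simp_all
  qed
  have b: "r k \<le> 1" "r (Suc k) \<le> 1" using assms(1) by (auto simp: seq_space_def)
  have rk: "r k = r 0" using eq by blast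
  show ?thesis
  proof (cases "r 0 = 0")
    case True
    then have "r k = 0" "r (Suc k) = 1" using rk k b by auto
    then have "lex_less r (shift r)" unfolding lex_less_def using lt
      by (intro exI[of _ k]) (simp add: shift_def)
    then show ?thesis using True by simp
  next
    case False
    then have "r k = 1" "r (Suc k) = 0" using rk k b by auto
    then have "lex_less (shift r) r" unfolding lex_less_def using lt
      by (intro exI[of _ k]) (simp add: shift_def)
    then show ?thesis using False lex_less_asym by blast
  qed
qed



lemma has_pattern_chain:
  assumes hp: "has_pattern x r" and dist: "distinct r" and ab: "a < b" "b < length r"
  shows "x (r ! a) \<ge> x (r ! b) \<and> (x (r ! a) = x (r ! b) \<longrightarrow> r ! a > r ! b)"
  using ab
proof (induction b)
  case 0 then show ?case by simp
next
  case (Suc b)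
  have step: "x (r ! b) \<ge> x (r ! Suc b) \<and> (x (r ! b) = x (r ! Suc b) \<longrightarrow> r ! b > r ! Suc b)"
  proof -
    have "0 < Suc b" "Suc b < length r" using Suc.prems by auto
    from hp[unfolded has_pattern_def, rule_format, OF this] show ?thesis by simp
  qed
  show ?case
  proof (cases "a = b")
    case True then show ?thesis using step by simp
  next
    case False
    then have "x (r ! a) \<ge> x (r ! b) \<and> (x (r ! a) = x (r ! b) \<longrightarrow> r ! a > r ! b)"
      using Suc by auto
    then have ih: "x (r ! a) \<ge> x (r ! b)" "x (r ! a) = x (r ! b) \<Longrightarrow> r ! a > r ! b" by auto
    have 1: "x (r ! a) \<ge> x (r ! Suc b)" using ih(1) step by linarith
    have 2: "r ! a > r ! Suc b" if e: "x (r ! a) = x (r ! Suc b)"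
    proof -
      have "x (r ! a) = x (r ! b)" "x (r ! b) = x (r ! Suc b)" using e ih(1) step by linarith+
      then have "r ! a > r ! b" "r ! b > r ! Suc b" using ih(2) step by auto
      then show ?thesis by linarith
    qed
    show ?thesis using 1 2 by blast
  qed
qed

lemma pattern_strict_iff:
  assumes hp: "has_pattern x r" and pr: "r \<in> patterns d" and ij: "i < j" "j \<le> d"
  shows "x i > x j \<longleftrightarrow> (\<exists>a b. a < b \<and> b < length r \<and> r ! a = i \<and> r ! b = j)"
proof -
  have dist: "distinct r" and st: "set r = {0..d}" using pr by (auto simp: patterns_def)
  have "i \<in> set r" "j \<in> set r" using st ij by auto
  then obtain a b where a: "a < length r" "r ! a = i" and b: "b < length r" "r ! b = j"
    by (auto simp: in_set_conv_nth)
  have ab: "a \<noteq> b" using a b ij by auto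
  show ?thesis
  proof (cases "a < b")
    case True
    then have "x i \<ge> x j \<and> (x i = x j \<longrightarrow> i > j)" using has_pattern_chain[OF hp dist True b(1)] a b by simp
    then have "x i > x j" using ij by auto
    then show ?thesis using True a b by blast
  next
    case False
    then have "b < a" using ab by simp
    then have "x j \<ge> x i" using has_pattern_chain[OF hp dist \<open>b < a\<close> a(1)] a b by simp
    moreover have "\<not> (\<exists>a' b'. a' < b' \<and> b' < length r \<and> r ! a' = i \<and> r ! b' = j)"
    proof
      assume "\<exists>a' b'. a' < b' \<and> b' < length r \<and> r ! a' = i \<and> r ! b' = j"
      then obtain a' b' where ab': "a' < b'" "b' < length r" "r ! a' = i" "r ! b' = j" by blast
      have "a' = a" using nth_eq_iff_index_eq[OF dist, of a' a] ab' a by simp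
      moreover have "b' = b" using nth_eq_iff_index_eq[OF dist, of b' b] ab' b by simp
      ultimately show False using ab' \<open>b < a\<close> by simp
    qed
    ultimately show ?thesis by simp
  qed
qed

lemma pattern_same_strict:
  assumes "has_pattern x r" "has_pattern y r" "r \<in> patterns d" "i < j" "j \<le> d"
  shows "x i > x j \<longleftrightarrow> y i > y j"
  using pattern_strict_iff[OF assms(1,3-5)] pattern_strict_iff[OF assms(2,3-5)] by simp

lemma has_pattern_cong:
  assumes pr: "r \<in> patterns d"
    and xy: "\<And>i j. i < j \<Longrightarrow> j \<le> d \<Longrightarrow> (x i > x j \<longleftrightarrow> y i > y j)"
  shows "has_pattern x r \<longleftrightarrow> has_pattern y r"
proof -
  have dist: "distinct r" and st: "set r = {0..d}" using pr by (auto simp: patterns_def)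
  have c: "(x (r ! (k - 1)) \<ge> x (r ! k) \<and> (x (r ! (k - 1)) = x (r ! k) \<longrightarrow> r ! (k - 1) > r ! k))
      \<longleftrightarrow> (y (r ! (k - 1)) \<ge> y (r ! k) \<and> (y (r ! (k - 1)) = y (r ! k) \<longrightarrow> r ! (k - 1) > r ! k))"
    if k: "0 < k" "k < length r" for k
  proof -
    define u where "u = r ! (k - 1)"
    define v where "v = r ! k"
    have uv: "u \<noteq> v" using dist k unfolding u_def v_def
      using nth_eq_iff_index_eq[OF dist, of "k - 1" k] by simp
    have ud: "u \<le> d" "v \<le> d" using st k unfolding u_def v_def
      using nth_mem[of "k - 1" r] nth_mem[of k r] by auto
    show ?thesis
    proof (cases "v < u")
      case True
      have "(x u \<ge> x v \<and> (x u = x v \<longrightarrow> u > v)) \<longleftrightarrow> \<not> x v > x u" using True by auto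
      moreover have "(y u \<ge> y v \<and> (y u = y v \<longrightarrow> u > v)) \<longleftrightarrow> \<not> y v > y u" using True by auto
      ultimately show ?thesis using xy[OF True ud(1)] unfolding u_def v_def by simp
    next
      case False
      then have "u < v" using uv by simp
      have "(x u \<ge> x v \<and> (x u = x v \<longrightarrow> u > v)) \<longleftrightarrow> x u > x v" using \<open>u < v\<close> by auto
      moreover have "(y u \<ge> y v \<and> (y u = y v \<longrightarrow> u > v)) \<longleftrightarrow> y u > y v" using \<open>u < v\<close> by auto
      ultimately show ?thesis using xy[OF \<open>u < v\<close> ud(2)] unfolding u_def v_def by simp
    qed
  qed
  show ?thesis unfolding has_pattern_def using c by blast
qed



lemma sorted_exists:
  fixes x :: "nat \<Rightarrow> real"
  shows "finite A \<Longrightarrow> \<exists>r. distinct r \<and> set r = A \<and>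
     sorted_wrt (\<lambda>i j. x i > x j \<or> (x i = x j \<and> i > j)) r"
proof (induction "card A" arbitrary: A)
  case 0 then show ?case by (intro exI[of _ "[]"]) auto
next
  case (Suc n)
  then have ne: "A \<noteq> {}" by auto
  define Mx where "Mx = Max (x ` A)"
  define m where "m = Max {i\<in>A. x i = Mx}"
  have MxA: "Mx \<in> x ` A" unfolding Mx_def using Suc.prems ne by simp
  have fin2: "finite {i\<in>A. x i = Mx}" using Suc.prems by simp
  have ne2: "{i\<in>A. x i = Mx} \<noteq> {}" using MxA by auto
  have mA: "m \<in> A" "x m = Mx" using Max_in[OF fin2 ne2] unfolding m_def by auto
  have big: "x m > x a \<or> (x m = x a \<and> m > a)" if "a \<in> A - {m}" for a
  proof -
    have "x a \<le> Mx" unfolding Mx_def using Suc.prems that by simp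
    moreover have "x a = Mx \<Longrightarrow> a \<le> m" unfolding m_def using fin2 that by simp
    ultimately show ?thesis using that mA by force
  qed
  have "n = card (A - {m})" using Suc.hyps(2) mA by simp
  then obtain r' where r': "distinct r'" "set r' = A - {m}"
     "sorted_wrt (\<lambda>i j. x i > x j \<or> (x i = x j \<and> i > j)) r'"
    using Suc.hyps(1) Suc.prems by blast
  show ?case using r' mA big by (intro exI[of _ "m # r'"]) auto
qed

lemma pattern_exists: "\<exists>r\<in>patterns d. has_pattern x r"
proof -
  obtain r where r: "distinct r" "set r = {0..d}"
     "sorted_wrt (\<lambda>i j. x i > x j \<or> (x i = x j \<and> i > j)) r"
    using sorted_exists[of "{0..d}" x] by auto
  have "has_pattern x r" unfolding has_pattern_def
  proof (intro allI impI)
    fix k assume k: "0 < k" "k < length r"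
    have "x (r ! (k - 1)) > x (r ! k) \<or> (x (r ! (k - 1)) = x (r ! k) \<and> r ! (k - 1) > r ! k)"
      using sorted_wrt_nth_less[OF r(3), of "k - 1" k] k by simp
    then show "x (r ! (k - 1)) \<ge> x (r ! k) \<and> (x (r ! (k - 1)) = x (r ! k) \<longrightarrow> r ! (k - 1) > r ! k)"
      by auto
  qed
  then show ?thesis using r by (auto simp: patterns_def)
qed

lemma finite_patterns: "finite (patterns d)"
proof -
  have "patterns d \<subseteq> {xs. set xs \<subseteq> {0..d} \<and> length xs = Suc d}"
    unfolding patterns_def by (auto simp: distinct_card[symmetric])
  then show ?thesis by (rule finite_subset) (simp add: finite_lists_length_eq)
qed


locale mshift =
  fixes Q :: "nat \<Rightarrow> nat \<Rightarrow> real" and p :: "nat \<Rightarrow> real" and M :: "(nat \<Rightarrow> nat) measure"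
  assumes ms: "markov_shift 1 Q p M"
begin

lemma Qnn: "i \<le> 1 \<Longrightarrow> j \<le> 1 \<Longrightarrow> 0 \<le> Q i j" using ms by (simp add: markov_shift_def)
lemma Qrow: "i \<le> 1 \<Longrightarrow> Q i 0 + Q i 1 = 1" using ms by (simp add: markov_shift_def)
lemma ppos: "a \<le> 1 \<Longrightarrow> 0 < p a" using ms by (simp add: markov_shift_def)
lemma psum: "p 0 + p 1 = 1" using ms by (simp add: markov_shift_def)
lemma pstat: "j \<le> 1 \<Longrightarrow> p 0 * Q 0 j + p 1 * Q 1 j = p j" using ms by (simp add: markov_shift_def)
lemma prob: "prob_space M" using ms by (simp add: markov_shift_def)
lemma space_eq: "space M = seq_space 1" using ms by (simp add: markov_shift_def)
lemma sets_eq: "sets M = sigma_sets (seq_space 1) {cylinder 1 a n | a n. True}"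
  using ms by (simp add: markov_shift_def)
lemma cyl_meas: "(\<And>i. i < n \<Longrightarrow> a i \<le> 1) \<Longrightarrow> 1 \<le> n \<Longrightarrow>
    measure M (cylinder 1 a n) = p (a 0) * (\<Prod>i<n - 1. Q (a i) (a (Suc i)))"
  using ms unfolding markov_shift_def by blast

sublocale prob_space M by (rule prob)

lemma gen_sub: "{cylinder 1 a n | a n. True} \<subseteq> Pow (seq_space 1)"
  by (auto simp: cylinder_def)

lemma cyl_sets[measurable]: "cylinder 1 a n \<in> sets M"
  unfolding sets_eq by (rule sigma_sets.Basic) blast

lemma cyl_sets'[measurable, simp]: "cylinder (Suc 0) a n \<in> sets M"
  using cyl_sets by simp

lemma shift_preimage_cyl:
  "shift -` cylinder 1 a n \<inter> seq_space 1 =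
     cylinder 1 (\<lambda>i. if i = 0 then 0 else a (i - 1)) (Suc n) \<union>
     cylinder 1 (\<lambda>i. if i = 0 then 1 else a (i - 1)) (Suc n)"
proof (intro set_eqI iffI)
  fix t assume t: "t \<in> shift -` cylinder 1 a n \<inter> seq_space 1"
  then have t1: "t \<in> seq_space 1" "\<forall>i<n. t (Suc i) = a i" by (auto simp: cylinder_def shift_def)
  have "t 0 \<le> 1" using t1 by (simp add: seq_space_def)
  then have "t 0 = 0 \<or> t 0 = 1" by auto
  then show "t \<in> cylinder 1 (\<lambda>i. if i = 0 then 0 else a (i - 1)) (Suc n) \<union>
     cylinder 1 (\<lambda>i. if i = 0 then 1 else a (i - 1)) (Suc n)"
    using t1 unfolding cylinder_def All_less_Suc2 by auto
next
  fix t assume "t \<in> cylinder 1 (\<lambda>i. if i = 0 then 0 else a (i - 1)) (Suc n) \<union>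
     cylinder 1 (\<lambda>i. if i = 0 then 1 else a (i - 1)) (Suc n)"
  then have "t \<in> seq_space 1" "\<forall>i<n. t (Suc i) = a i" unfolding cylinder_def All_less_Suc2 by auto
  then show "t \<in> shift -` cylinder 1 a n \<inter> seq_space 1"
    by (auto simp: cylinder_def shift_def seq_space_def)
qed

lemma shift_meas[measurable]: "shift \<in> measurable M M"
proof (rule measurable_sigma_sets[OF sets_eq gen_sub])
  show "shift \<in> space M \<rightarrow> seq_space 1" using seq_space_shift by (auto simp: space_eq)
  fix y assume "y \<in> {cylinder 1 a n | a n. True}"
  then obtain a n where y: "y = cylinder 1 a n" by blast
  show "shift -` y \<inter> space M \<in> sets M" unfolding y space_eq shift_preimage_cyl
    by (intro sets.Un cyl_sets)
qed

lemma shift_pow_meas[measurable]: "(shift ^^ n) \<in> measurable M M"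
  by (rule measurable_compose_n[OF shift_meas])

lemma coord_pre: "{s \<in> space M. s i = c} = (shift ^^ i) -` cylinder 1 (\<lambda>_. c) 1 \<inter> space M"
  by (auto simp: cylinder_def space_eq seq_space_def shift_pow)

lemma coord_meas[measurable]: "(\<lambda>s. s i) \<in> measurable M (count_space UNIV)"
proof -
  have "(\<lambda>s. s i) -` {c} \<inter> space M \<in> sets M" for c
  proof -
    have "(\<lambda>s. s i) -` {c} \<inter> space M = {s \<in> space M. s i = c}" by auto
    also have "\<dots> \<in> sets M" unfolding coord_pre by measurable
    finally show ?thesis .
  qed
  then show ?thesis by (simp add: measurable_count_space_eq2_countable)
qed

lemma shift_space: "s \<in> space M \<Longrightarrow> (shift ^^ n) s \<in> space M"
  by (simp add: space_eq seq_space_shift_pow)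

lemma cyl_sub: "cylinder 1 a n \<subseteq> seq_space 1"
  by (auto simp: cylinder_def)

lemma cyl_Int_aux: "k \<le> n \<Longrightarrow> \<exists>c m. cylinder 1 a n \<inter> cylinder 1 b k = cylinder 1 c m"
proof (cases "\<forall>i<k. a i = b i")
  case True
  assume "k \<le> n"
  then have "cylinder 1 a n \<inter> cylinder 1 b k = cylinder 1 a n"
    using True by (auto simp: cylinder_def)
  then show ?thesis by blast
next
  case False
  then obtain i where i: "i < k" "a i \<noteq> b i" by blast
  assume "k \<le> n"
  then have "cylinder 1 a n \<inter> cylinder 1 b k = {}" using i by (auto simp: cylinder_def)
  moreover have "cylinder 1 (\<lambda>_. 2) 1 = {}"
  proof -
    { fix x assume "x \<in> cylinder 1 (\<lambda>_. 2) 1"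
      then have a: "\<forall>i. x i \<le> 1" "\<forall>i<1. x i = 2" unfolding cylinder_def seq_space_def by auto
      from a(1) have "x 0 \<le> 1" by blast
      moreover from a(2) have "x 0 = 2" by blast
      ultimately have False by simp }
    then show ?thesis by blast
  qed
  ultimately show ?thesis by metis
qed

lemma Int_stable_cyl: "Int_stable {cylinder 1 a n | a n. True}"
proof (rule Int_stableI)
  fix x y assume "x \<in> {cylinder 1 a n | a n. True}" "y \<in> {cylinder 1 a n | a n. True}"
  then obtain a n b k where xy: "x = cylinder 1 a n" "y = cylinder 1 b k" by blast
  show "x \<inter> y \<in> {cylinder 1 a n | a n. True}"
  proof (cases "k \<le> n")
    case True then show ?thesis using cyl_Int_aux[OF True, of a b] xy by auto
  next
    case False
    then have "n \<le> k" by simp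
    then show ?thesis using cyl_Int_aux[of n k b a] xy by (auto simp: Int_commute)
  qed
qed

lemma prod_lessThan_add: fixes f :: "nat \<Rightarrow> real" and n m :: nat shows "(\<Prod>i<n + m. f i) = (\<Prod>i<n. f i) * (\<Prod>i<m. f (n + i) :: real)"
  by (induction m) (simp_all add: mult.assoc)

lemma markov_basic:
  assumes w: "\<And>i. i \<le> n \<Longrightarrow> w i \<le> 1"
  shows "measure M (cylinder 1 w (Suc n) \<inter> ((shift ^^ n) -` cylinder 1 e k \<inter> space M)) * p (w n) =
    measure M (cylinder 1 w (Suc n)) * measure M (cylinder 1 (\<lambda>_. w n) 1 \<inter> cylinder 1 e k)"
proof -
  define c where "c = w n"
  have c1: "c \<le> 1" using w c_def by simp
  have mZ: "measure M (cylinder 1 (\<lambda>_. c) 1) = p c" using cyl_meas[of 1 "\<lambda>_. c"] c1 by simp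
  have mC: "measure M (cylinder 1 w (Suc n)) = p (w 0) * (\<Prod>i<n. Q (w i) (w (Suc i)))"
    using cyl_meas[of "Suc n" w] w by simp
  show ?thesis
  proof (cases "k = 0")
    case True
    have "cylinder 1 e k = seq_space 1" using True by (auto simp: cylinder_def)
    then have "cylinder 1 w (Suc n) \<inter> ((shift ^^ n) -` cylinder 1 e k \<inter> space M) = cylinder 1 w (Suc n)"
      "cylinder 1 (\<lambda>_. w n) 1 \<inter> cylinder 1 e k = cylinder 1 (\<lambda>_. c) 1"
      using shift_space by (auto simp: space_eq cylinder_def c_def)
    then show ?thesis using mZ by (simp add: c_def)
  next
    case k0: False
    show ?thesis
    proof (cases "\<exists>i<k. e i > 1")
      case True
      then obtain i where i: "i < k" "e i > 1" by blast
      have "cylinder 1 e k = {}"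
      proof -
        { fix x assume "x \<in> cylinder 1 e k"
          then have a: "\<forall>i. x i \<le> 1" "\<forall>i<k. x i = e i" unfolding cylinder_def seq_space_def by auto
          from a(1) have "x i \<le> 1" by blast
          moreover from a(2) i have "x i = e i" by blast
          ultimately have False using i by simp }
        then show ?thesis by blast
      qed
      then show ?thesis by simp
    next
      case False
      then have e1: "\<And>i. i < k \<Longrightarrow> e i \<le> 1" by auto
      show ?thesis
      proof (cases "e 0 = c")
        case False
        have "cylinder 1 w (Suc n) \<inter> ((shift ^^ n) -` cylinder 1 e k \<inter> space M) = {}"
          using False k0 by (auto simp: cylinder_def shift_pow c_def)
        moreover have "cylinder 1 (\<lambda>_. w n) 1 \<inter> cylinder 1 e k = {}"
          using False k0 by (auto simp: cylinder_def c_def)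
        ultimately show ?thesis by simp
      next
        case True
        define v where "v i = (if i \<le> n then w i else e (i - n))" for i
        have set1: "cylinder 1 w (Suc n) \<inter> ((shift ^^ n) -` cylinder 1 e k \<inter> space M) = cylinder 1 v (n + k)"
        proof (intro set_eqI iffI)
          fix t assume t: "t \<in> cylinder 1 w (Suc n) \<inter> ((shift ^^ n) -` cylinder 1 e k \<inter> space M)"
          have "t i = v i" if "i < n + k" for i
          proof (cases "i \<le> n")
            case True then show ?thesis using t by (auto simp: cylinder_def v_def)
          next
            case False
            then have "i - n < k" "i - n + n = i" using that by auto
            then show ?thesis using t False by (auto simp: cylinder_def v_def shift_pow dest!: bspec)
          qed
          then show "t \<in> cylinder 1 v (n + k)" using t by (auto simp: cylinder_def)
        next
          fix t assume t: "t \<in> cylinder 1 v (n + k)"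
          have a: "t i = w i" if "i < Suc n" for i
            using t that k0 by (auto simp: cylinder_def v_def)
          have b: "t (j + n) = e j" if "j < k" for j
          proof (cases j)
            case 0 then show ?thesis using a[of n] True by (simp add: c_def)
          next
            case (Suc j') then show ?thesis using t that by (auto simp: cylinder_def v_def)
          qed
          show "t \<in> cylinder 1 w (Suc n) \<inter> ((shift ^^ n) -` cylinder 1 e k \<inter> space M)"
            using t a b by (auto simp: cylinder_def shift_pow space_eq seq_space_def)
        qed
        have set2: "cylinder 1 (\<lambda>_. w n) 1 \<inter> cylinder 1 e k = cylinder 1 e k"
          using True k0 by (auto simp: cylinder_def c_def)
        have v1: "\<And>i. i < n + k \<Longrightarrow> v i \<le> 1" using w e1 by (auto simp: v_def)
        have mV: "measure M (cylinder 1 v (n + k)) = p (v 0) * (\<Prod>i<n + (k - 1). Q (v i) (v (Suc i)))"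
          using cyl_meas[of "n + k" v] v1 k0 by simp
        have pr1: "(\<Prod>i<n. Q (v i) (v (Suc i))) = (\<Prod>i<n. Q (w i) (w (Suc i)))"
          by (rule prod.cong) (auto simp: v_def)
        have pr2: "(\<Prod>i<k - 1. Q (v (n + i)) (v (Suc (n + i)))) = (\<Prod>i<k - 1. Q (e i) (e (Suc i)))"
        proof (rule prod.cong)
          fix i assume "i \<in> {..<k - 1}"
          show "Q (v (n + i)) (v (Suc (n + i))) = Q (e i) (e (Suc i))"
            using True by (cases i) (auto simp: v_def c_def)
        qed simp
        have mE: "measure M (cylinder 1 e k) = p c * (\<Prod>i<k - 1. Q (e i) (e (Suc i)))"
          using cyl_meas[of k e] e1 k0 True by simp
        show ?thesis unfolding set1 set2 mV mE mC prod_lessThan_add pr1 pr2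
          by (simp add: v_def c_def)
      qed
    qed
  qed
qed

lemma markov_cyl:
  assumes w: "\<And>i. i \<le> n \<Longrightarrow> w i \<le> 1" and E: "E \<in> sets M"
  shows "measure M (cylinder 1 w (Suc n) \<inter> ((shift ^^ n) -` E \<inter> space M)) * p (w n) =
    measure M (cylinder 1 w (Suc n)) * measure M (cylinder 1 (\<lambda>_. w n) 1 \<inter> E)"
proof -
  define C where "C = cylinder 1 w (Suc n)"
  define Z where "Z = cylinder 1 (\<lambda>_. w n) 1"
  have E': "E \<in> sigma_sets (seq_space 1) {cylinder 1 a n | a n. True}" using E sets_eq by simp
  have CM: "C \<in> sets M" "Z \<in> sets M" unfolding C_def Z_def by (rule cyl_sets)+
  show ?thesis unfolding C_def[symmetric] Z_def[symmetric]
  using Int_stable_cyl gen_sub E'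
  proof (induction rule: sigma_sets_induct_disjoint)
    case (basic A)
    then obtain a k where "A = cylinder 1 a k" by blast
    then show ?case using markov_basic[OF w] unfolding C_def Z_def by simp
  next
    case empty then show ?case by simp
  next
    case (compl A)
    have A: "A \<in> sets M" using compl(1) sets_eq by simp
    have e1: "C \<inter> ((shift ^^ n) -` (seq_space 1 - A) \<inter> space M) = C - (C \<inter> ((shift ^^ n) -` A \<inter> space M))"
      using shift_space by (auto simp: C_def cylinder_def space_eq)
    have e2: "Z \<inter> (seq_space 1 - A) = Z - (Z \<inter> A)" using cyl_sub unfolding Z_def by auto
    have m1: "measure M (C - (C \<inter> ((shift ^^ n) -` A \<inter> space M))) = measure M C - measure M (C \<inter> ((shift ^^ n) -` A \<inter> space M))"
      using A CM by (intro finite_measure_Diff) auto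
    have m2: "measure M (Z - (Z \<inter> A)) = measure M Z - measure M (Z \<inter> A)"
      using A CM by (intro finite_measure_Diff) auto
    have mZ: "measure M Z = p (w n)" unfolding Z_def using cyl_meas[of 1 "\<lambda>_. w n"] w by simp
    show ?case unfolding e1 e2 m1 m2 mZ using compl(2) mZ by (simp add: algebra_simps)
  next
    case (union A)
    have A: "\<And>i. A i \<in> sets M" using union(2) sets_eq by auto
    have e1: "C \<inter> ((shift ^^ n) -` (\<Union>i. A i) \<inter> space M) = (\<Union>i. C \<inter> ((shift ^^ n) -` A i \<inter> space M))" by auto
    have e2: "Z \<inter> (\<Union>i. A i) = (\<Union>i. Z \<inter> A i)" by auto
    have s1: "(\<lambda>i. measure M (C \<inter> ((shift ^^ n) -` A i \<inter> space M))) sums measure M (\<Union>i. C \<inter> ((shift ^^ n) -` A i \<inter> space M))"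
      using A CM union(1) by (intro finite_measure_UNION) (auto simp: disjoint_family_on_def)
    have s2: "(\<lambda>i. measure M (Z \<inter> A i)) sums measure M (\<Union>i. Z \<inter> A i)"
      using A CM union(1) by (intro finite_measure_UNION) (auto simp: disjoint_family_on_def)
    have "(\<lambda>i. measure M (C \<inter> ((shift ^^ n) -` A i \<inter> space M)) * p (w n)) sums (measure M (\<Union>i. C \<inter> ((shift ^^ n) -` A i \<inter> space M)) * p (w n))"
      using sums_mult2[OF s1] .
    moreover have "(\<lambda>i. measure M C * measure M (Z \<inter> A i)) sums (measure M C * measure M (\<Union>i. Z \<inter> A i))"
      using sums_mult[OF s2] .
    ultimately show ?case unfolding e1 e2 using union(3) sums_unique2 by fastforce
  qed
qed

lemma coord_sets[measurable]: "{s \<in> space M. s i = c} \<in> sets M"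
  unfolding coord_pre by measurable

lemma split_coord:
  assumes F: "F \<in> sets M"
  shows "measure M F = measure M (F \<inter> {s \<in> space M. s i = 0}) + measure M (F \<inter> {s \<in> space M. s i = 1})"
proof -
  have "F \<subseteq> space M" using F sets.sets_into_space by blast
  then have "F = (F \<inter> {s \<in> space M. s i = 0}) \<union> (F \<inter> {s \<in> space M. s i = 1})"
  proof (intro equalityI subsetI)
    fix x assume "x \<in> F"
    then have "x \<in> space M" "x i \<le> 1" using \<open>F \<subseteq> space M\<close> by (auto simp: space_eq seq_space_def)
    then have "x i = 0 \<or> x i = 1" by auto
    then show "x \<in> (F \<inter> {s \<in> space M. s i = 0}) \<union> (F \<inter> {s \<in> space M. s i = 1})"
      using \<open>x \<in> F\<close> \<open>x \<in> space M\<close> by blast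
  qed auto
  then have "measure M F = measure M ((F \<inter> {s \<in> space M. s i = 0}) \<union> (F \<inter> {s \<in> space M. s i = 1}))"
    by simp
  also have "\<dots> = measure M (F \<inter> {s \<in> space M. s i = 0}) + measure M (F \<inter> {s \<in> space M. s i = 1})"
    using F by (intro finite_measure_Union) auto
  finally show ?thesis .
qed

lemma shift_invariant1:
  assumes E: "E \<in> sets M"
  shows "measure M (shift -` E \<inter> space M) = measure M E"
proof -
  define F where "F = shift -` E \<inter> space M"
  have F: "F \<in> sets M" unfolding F_def using E by measurable
  define Zs where "Zs i c = {s \<in> space M. s i = c}" for i c :: nat
  define m where "m a e = measure M (F \<inter> Zs 0 a \<inter> Zs 1 e)" for a e
  define \<mu> where "\<mu> e = measure M (E \<inter> Zs 0 e)" for e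
  have key: "m a e * p e = p a * Q a e * \<mu> e" if ae: "a \<le> 1" "e \<le> 1" for a e
  proof -
    define w where "w i = (if i = 0 then a else e)" for i :: nat
    have w1: "\<And>i. i \<le> 1 \<Longrightarrow> w i \<le> 1" using ae by (auto simp: w_def)
    have s1: "cylinder 1 w (Suc 1) \<inter> ((shift ^^ 1) -` E \<inter> space M) = F \<inter> Zs 0 a \<inter> Zs 1 e"
    proof -
      have "(\<forall>i<Suc 1. t i = w i) \<longleftrightarrow> t 0 = a \<and> t 1 = e" for t :: "nat \<Rightarrow> nat"
        unfolding All_less_Suc2 by (simp add: w_def)
      then show ?thesis by (auto simp: cylinder_def F_def Zs_def space_eq)
    qed
    have s2: "cylinder 1 (\<lambda>_. e) 1 \<inter> E = E \<inter> Zs 0 e"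
      using E sets.sets_into_space by (auto simp: cylinder_def Zs_def space_eq w_def)
    have mc: "measure M (cylinder 1 w (Suc 1)) = p a * Q a e"
      using cyl_meas[of "Suc 1" w] w1 by (simp add: w_def)
    have mk: "measure M (cylinder 1 w (Suc 1) \<inter> ((shift ^^ 1) -` E \<inter> space M)) * p (w 1) =
      measure M (cylinder 1 w (Suc 1)) * measure M (cylinder 1 (\<lambda>_. w 1) 1 \<inter> E)"
      by (rule markov_cyl[of 1 w E, OF w1 E])
    have w1': "w 1 = e" by (simp add: w_def)
    show ?thesis using mk unfolding w1' s1 s2 mc m_def \<mu>_def .
  qed
  have sum_e: "m 0 e + m 1 e = \<mu> e" if e: "e \<le> 1" for e
  proof -
    have "(m 0 e + m 1 e) * p e = (p 0 * Q 0 e + p 1 * Q 1 e) * \<mu> e"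
      using key[of 0 e] key[of 1 e] e by (simp add: algebra_simps)
    also have "\<dots> = p e * \<mu> e" using pstat[OF e] by simp
    finally show ?thesis using ppos[OF e] by simp
  qed
  have Zs_sets: "Zs i c \<in> sets M" for i c unfolding Zs_def by simp
  have sp0: "measure M F = measure M (F \<inter> Zs 0 0) + measure M (F \<inter> Zs 0 1)"
    using split_coord[OF F, of 0] unfolding Zs_def .
  have sp1: "measure M (F \<inter> Zs 0 a) = m a 0 + m a 1" for a
    using split_coord[of "F \<inter> Zs 0 a" 1] F Zs_sets unfolding m_def Zs_def by blast
  have "measure M F = (m 0 0 + m 0 1) + (m 1 0 + m 1 1)"
    using sp0 sp1[of 0] sp1[of 1] by linarith
  also have "\<dots> = \<mu> 0 + \<mu> 1" using sum_e[of 0] sum_e[of 1] by simp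
  also have "\<dots> = measure M E" unfolding \<mu>_def Zs_def using split_coord[OF E, of 0] by linarith
  finally show ?thesis unfolding F_def .
qed

lemma shift_invariant:
  assumes E: "E \<in> sets M"
  shows "measure M ((shift ^^ k) -` E \<inter> space M) = measure M E"
proof (induction k)
  case 0 then show ?case using E sets.sets_into_space by (simp add: Int_absorb2)
next
  case (Suc k)
  have eq: "(shift ^^ Suc k) -` E \<inter> space M = shift -` ((shift ^^ k) -` E \<inter> space M) \<inter> space M"
    using seq_space_shift by (auto simp: shift_pow_Suc space_eq funpow_swap1)
  have meas: "(shift ^^ k) -` E \<inter> space M \<in> sets M" using E by measurable
  have X: "measure M (shift -` ((shift ^^ k) -` E \<inter> space M) \<inter> space M) = measure M ((shift ^^ k) -` E \<inter> space M)"
    by (rule shift_invariant1[OF meas])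
  show ?case by (subst eq) (rule trans[OF X Suc.IH])
qed

definition Zinf :: "nat \<Rightarrow> (nat \<Rightarrow> nat) set" where
  "Zinf c = {s \<in> space M. \<forall>i. s i = c}"

lemma Zinf_eq: "Zinf c = (\<Inter>j. cylinder 1 (\<lambda>_. c) (Suc j))"
  by (auto simp: Zinf_def cylinder_def space_eq)

lemma Zinf_sets[measurable]: "Zinf c \<in> sets M"
  unfolding Zinf_eq by (intro sets.countable_INT) auto

lemma Zinf_lim:
  assumes c: "c \<le> 1"
  shows "(\<lambda>j. p c * Q c c ^ j) \<longlonglongrightarrow> measure M (Zinf c)"
proof -
  have "(\<lambda>j. measure M (cylinder 1 (\<lambda>_. c) (Suc j))) \<longlonglongrightarrow> measure M (\<Inter>j. cylinder 1 (\<lambda>_. c) (Suc j))"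
  proof (rule finite_Lim_measure_decseq)
    show "range (\<lambda>j. cylinder 1 (\<lambda>_. c) (Suc j)) \<subseteq> sets M" by auto
    show "decseq (\<lambda>j. cylinder 1 (\<lambda>_. c) (Suc j))"
      by (rule decseq_SucI) (auto simp: cylinder_def)
  qed
  moreover have "measure M (cylinder 1 (\<lambda>_. c) (Suc j)) = p c * Q c c ^ j" for j
    using cyl_meas[of "Suc j" "\<lambda>_. c"] c by simp
  ultimately show ?thesis unfolding Zinf_eq by simp
qed

lemma Zinf_null:
  assumes c: "c \<le> 1" and q: "Q c c < 1"
  shows "measure M (Zinf c) = 0"
proof -
  have "(\<lambda>j. p c * Q c c ^ j) \<longlonglongrightarrow> p c * 0"
    using Qnn[OF c c] q by (intro tendsto_mult tendsto_const LIMSEQ_power_zero) auto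
  then show ?thesis using Zinf_lim[OF c] LIMSEQ_unique by fastforce
qed

lemma Zinf_one:
  assumes c: "c \<le> 1" and q: "Q c c = 1"
  shows "measure M (Zinf c) = p c"
proof -
  have "(\<lambda>j. p c * Q c c ^ j) \<longlonglongrightarrow> p c" using q by simp
  then show ?thesis using Zinf_lim[OF c] LIMSEQ_unique by fastforce
qed

lemma ergodic_Qdiag:
  assumes erg: "ergodic_shift M" and c: "c \<le> 1"
  shows "Q c c < 1"
proof (rule ccontr)
  assume "\<not> Q c c < 1"
  moreover have "Q c c \<le> 1"
  proof -
    have "Q c 0 + Q c 1 = 1" "0 \<le> Q c 0" "0 \<le> Q c 1" using Qrow[OF c] Qnn[OF c, of 0] Qnn[OF c, of 1] by auto
    moreover have "c = 0 \<or> c = 1" using c by auto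
    ultimately show ?thesis by auto
  qed
  ultimately have q: "Q c c = 1" by simp
  define c' where "c' = 1 - c"
  have c01: "c = 0 \<or> c = 1" using c by auto
  have c': "c' \<le> 1" "c' \<noteq> c" using c01 unfolding c'_def by auto
  have st0: "p 0 * Q 0 0 + p 1 * Q 1 0 = p 0" by (rule pstat) simp
  have st1: "p 0 * Q 0 1 + p 1 * Q 1 1 = p 1" by (rule pstat) simp
  have r0: "Q 0 0 + Q 0 1 = 1" by (rule Qrow) simp
  have r1: "Q 1 0 + Q 1 1 = 1" by (rule Qrow) simp
  have p0: "0 < p 0" and p1: "0 < p 1" by (rule ppos, simp)+
  have q': "Q c' c' = 1"
  proof (cases "c = 0")
    case True
    then have c'1: "c' = 1" unfolding c'_def by simp
    have "Q 0 0 = 1" using q True by simp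
    then have "p 1 * Q 1 0 = 0" using st0 by simp
    then have "Q 1 0 = 0" using p1 by simp
    then show ?thesis using r1 c'1 by simp
  next
    case False
    then have c1: "c = 1" using c01 by simp
    then have c'0: "c' = 0" unfolding c'_def by simp
    have "Q 1 1 = 1" using q c1 by simp
    then have "p 0 * Q 0 1 = 0" using st1 by simp
    then have "Q 0 1 = 0" using p0 by simp
    then show ?thesis using r0 c'0 by simp
  qed
  define Y where "Y = (\<Union>k. \<Inter>i\<in>{k..}. {s \<in> space M. s i = c})"
  have Yk: "(\<Inter>i\<in>{k..}. {s \<in> space M. s i = c}) \<in> sets M" for k
    by (rule sets.countable_INT) auto
  have Ysets: "Y \<in> sets M" unfolding Y_def
    using Yk by (intro sets.countable_UN) blast
  have Ymem: "s \<in> Y \<longleftrightarrow> s \<in> space M \<and> (\<exists>k. \<forall>i\<ge>k. s i = c)" for s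
  proof
    assume "s \<in> Y"
    then obtain k where "\<forall>i\<in>{k..}. s \<in> space M \<and> s i = c" unfolding Y_def by blast
    then show "s \<in> space M \<and> (\<exists>k. \<forall>i\<ge>k. s i = c)" by auto
  next
    assume "s \<in> space M \<and> (\<exists>k. \<forall>i\<ge>k. s i = c)"
    then obtain k where "s \<in> space M" "\<forall>i\<ge>k. s i = c" by blast
    then show "s \<in> Y" unfolding Y_def by blast
  qed
  have Yinv: "shift -` Y \<inter> space M = Y"
  proof (intro set_eqI iffI)
    fix s assume "s \<in> shift -` Y \<inter> space M"
    then have s0: "shift s \<in> Y" "s \<in> space M" by auto
    then obtain k where "\<forall>i\<ge>k. shift s i = c" unfolding Ymem by blast
    then have s: "s \<in> space M" "\<forall>i\<ge>k. s (Suc i) = c" using s0 by (simp_all add: shift_def)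
    have "\<forall>i\<ge>Suc k. s i = c"
    proof (intro allI impI)
      fix i assume "Suc k \<le> i"
      then obtain j where "i = Suc j" "k \<le> j" by (cases i) auto
      then show "s i = c" using s by simp
    qed
    then show "s \<in> Y" unfolding Ymem using s by blast
  next
    fix s assume "s \<in> Y"
    then obtain k where s: "s \<in> space M" "\<forall>i\<ge>k. s i = c" unfolding Ymem by blast
    have "shift s \<in> space M" using s seq_space_shift by (simp add: space_eq)
    moreover have "\<forall>i\<ge>k. shift s i = c" using s by (simp add: shift_def)
    ultimately have "shift s \<in> Y" unfolding Ymem by blast
    then show "s \<in> shift -` Y \<inter> space M" using s by simp
  qed
  have sub: "Zinf c \<subseteq> Y"
  proof
    fix s assume "s \<in> Zinf c"
    then have "s \<in> space M" "\<forall>i\<ge>0. s i = c" unfolding Zinf_def by auto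
    then show "s \<in> Y" unfolding Ymem by blast
  qed
  have disj: "Y \<inter> Zinf c' = {}"
  proof -
    { fix s assume "s \<in> Y" "s \<in> Zinf c'"
      then obtain k where k: "\<forall>i\<ge>k. s i = c" "\<forall>i. s i = c'" unfolding Ymem Zinf_def by blast
      have "s k = c" using k(1) by blast
      moreover have "s k = c'" using k(2) by blast
      ultimately have "c = c'" by simp
      then have False using c' by simp }
    then show ?thesis by blast
  qed
  have "measure M Y \<ge> p c" using finite_measure_mono[OF sub Ysets] Zinf_one[OF c q] by simp
  then have pos: "measure M Y > 0" using ppos[OF c] by simp
  have "measure M Y + measure M (Zinf c') = measure M (Y \<union> Zinf c')"
    using disj Ysets by (intro finite_measure_Union[symmetric]) auto
  also have "\<dots> \<le> 1" by simp
  finally have "measure M Y < 1" using Zinf_one[OF c'(1) q'] ppos[OF c'(1)] by simp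
  moreover have "measure M Y = 0 \<or> measure M Y = 1"
    using erg Ysets Yinv unfolding ergodic_shift_def by blast
  ultimately show False using pos by simp
qed

end

locale lshift = mshift +
  fixes X :: "(nat \<Rightarrow> nat) \<Rightarrow> real" and d :: nat
  assumes erg: "ergodic_shift M" and Xm: "X \<in> borel_measurable M"
    and lex: "lexicographic_like M X" and d1: "1 \<le> d"
begin

definition goodS :: "(nat \<Rightarrow> nat) set" where
  "goodS = {s \<in> space M. \<forall>k. \<exists>i\<ge>k. s i \<noteq> s (Suc i)}"

definition Pe :: "(nat \<Rightarrow> nat) \<Rightarrow> nat \<Rightarrow> nat \<Rightarrow> bool" where
  "Pe s b a \<longleftrightarrow> lex_less ((shift ^^ b) s) ((shift ^^ a) s)"

definition Peq :: "(nat \<Rightarrow> nat) \<Rightarrow> (nat \<Rightarrow> nat) \<Rightarrow> bool" where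
  "Peq s t \<longleftrightarrow> (\<forall>b a. b < a \<longrightarrow> a \<le> d \<longrightarrow> (Pe s b a \<longleftrightarrow> Pe t b a))"

lemma goodS_space: "s \<in> goodS \<Longrightarrow> s \<in> space M"
  by (simp add: goodS_def)

lemma goodS_shift: assumes "s \<in> goodS" shows "(shift ^^ k) s \<in> goodS"
proof -
  have sp: "(shift ^^ k) s \<in> space M" using assms shift_space by (simp add: goodS_def)
  have "\<exists>i\<ge>j. (shift ^^ k) s i \<noteq> (shift ^^ k) s (Suc i)" for j
  proof -
    obtain i where i: "i \<ge> j + k" "s i \<noteq> s (Suc i)" using assms unfolding goodS_def by blast
    then have "(shift ^^ k) s (i - k) \<noteq> (shift ^^ k) s (Suc (i - k))"
      by (simp add: shift_pow_app Suc_diff_le)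
    then show ?thesis using i(1) by (intro exI[of _ "i - k"]) auto
  qed
  then show ?thesis using sp by (simp add: goodS_def)
qed

lemma goodS_shift_rev: assumes "t \<in> space M" "(shift ^^ k) t \<in> goodS" shows "t \<in> goodS"
proof -
  have "\<exists>i\<ge>j. t i \<noteq> t (Suc i)" for j
  proof -
    obtain i where i: "i \<ge> j" "(shift ^^ k) t i \<noteq> (shift ^^ k) t (Suc i)"
      using assms(2) unfolding goodS_def by blast
    then show ?thesis by (intro exI[of _ "i + k"]) (auto simp: shift_pow_app)
  qed
  then show ?thesis using assms(1) by (simp add: goodS_def)
qed

lemma goodS_nonconst: assumes "s \<in> goodS" shows "nonconst s"
  using assms unfolding goodS_def nonconst_def by blast

lemma goodS_bin: "s \<in> goodS \<Longrightarrow> s i \<le> 1"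
  by (auto simp: goodS_def space_eq seq_space_def)

lemma space_bin: "s \<in> space M \<Longrightarrow> s i \<le> 1"
  by (auto simp: space_eq seq_space_def)

lemma goodS_first: assumes "s \<in> goodS" shows "lex_less s (shift s) \<longleftrightarrow> s 0 = 0"
  using lex_less_shift_iff[of s] goodS_nonconst[OF assms] goodS_space[OF assms] by (simp add: space_eq)

lemma X_le: "s \<in> space M \<Longrightarrow> X ((shift ^^ j) s) \<le> X ((shift ^^ n) s) \<longleftrightarrow> lex_le ((shift ^^ j) s) ((shift ^^ n) s)"
  using lex unfolding lexicographic_like_def by blast

lemma X_less: assumes "s \<in> space M"
  shows "X ((shift ^^ j) s) < X ((shift ^^ n) s) \<longleftrightarrow> lex_less ((shift ^^ j) s) ((shift ^^ n) s)"
proof -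
  have "X ((shift ^^ j) s) < X ((shift ^^ n) s) \<longleftrightarrow> \<not> X ((shift ^^ n) s) \<le> X ((shift ^^ j) s)" by auto
  also have "\<dots> \<longleftrightarrow> \<not> lex_le ((shift ^^ n) s) ((shift ^^ j) s)" using X_le[OF assms] by simp
  also have "\<dots> \<longleftrightarrow> lex_less ((shift ^^ j) s) ((shift ^^ n) s)" by (rule not_lex_le_iff)
  finally show ?thesis .
qed

lemma inG: "s \<in> ordinal_set M X d \<pi> \<longleftrightarrow> s \<in> space M \<and> has_pattern (\<lambda>i. X ((shift ^^ (d - i)) s)) \<pi>"
  by (simp add: ordinal_set_def)

lemma strict_Pe: assumes "s \<in> space M" "i < j" "j \<le> d"
  shows "X ((shift ^^ (d - i)) s) > X ((shift ^^ (d - j)) s) \<longleftrightarrow> Pe s (d - j) (d - i)"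
  unfolding Pe_def using X_less[OF assms(1)] by simp

lemma G_cong:
  assumes pi: "\<pi> \<in> patterns d" and st: "s \<in> space M" "t \<in> space M" and P: "Peq s t"
  shows "s \<in> ordinal_set M X d \<pi> \<longleftrightarrow> t \<in> ordinal_set M X d \<pi>"
proof -
  have "has_pattern (\<lambda>i. X ((shift ^^ (d - i)) s)) \<pi> \<longleftrightarrow> has_pattern (\<lambda>i. X ((shift ^^ (d - i)) t)) \<pi>"
  proof (rule has_pattern_cong[OF pi])
    fix i j assume ij: "i < j" "j \<le> d"
    have "d - j < d - i" "d - i \<le> d" using ij by auto
    then have "Pe s (d - j) (d - i) \<longleftrightarrow> Pe t (d - j) (d - i)" using P unfolding Peq_def by blast
    then show "X ((shift ^^ (d - i)) s) > X ((shift ^^ (d - j)) s) \<longleftrightarrow> X ((shift ^^ (d - i)) t) > X ((shift ^^ (d - j)) t)"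
      using strict_Pe[OF st(1) ij] strict_Pe[OF st(2) ij] by simp
  qed
  then show ?thesis using st by (simp add: inG)
qed

lemma G_Peq:
  assumes pi: "\<pi> \<in> patterns d" and s: "s \<in> ordinal_set M X d \<pi>" and t: "t \<in> ordinal_set M X d \<pi>"
  shows "Peq s t"
  unfolding Peq_def
proof (intro allI impI)
  fix b a assume ba: "b < a" "a \<le> d"
  define i where "i = d - a"
  define j where "j = d - b"
  have ij: "i < j" "j \<le> d" using ba unfolding i_def j_def by auto
  have e: "d - i = a" "d - j = b" using ba unfolding i_def j_def by auto
  have hs: "has_pattern (\<lambda>i. X ((shift ^^ (d - i)) s)) \<pi>" "s \<in> space M" using s by (simp_all add: inG)
  have ht: "has_pattern (\<lambda>i. X ((shift ^^ (d - i)) t)) \<pi>" "t \<in> space M" using t by (simp_all add: inG)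
  have "X ((shift ^^ (d - i)) s) > X ((shift ^^ (d - j)) s) \<longleftrightarrow> X ((shift ^^ (d - i)) t) > X ((shift ^^ (d - j)) t)"
    using pattern_same_strict[OF hs(1) ht(1) pi ij] by simp
  then show "Pe s b a \<longleftrightarrow> Pe t b a"
    using strict_Pe[OF hs(2) ij] strict_Pe[OF ht(2) ij] unfolding e by simp
qed

lemma shift_comm: "shift ((shift ^^ k) s) = (shift ^^ k) (shift s)"
  by (rule funpow_swap1)

lemma Pe_Suc: "Pe s (Suc b) (Suc a) \<longleftrightarrow> Pe (shift s) b a"
  unfolding Pe_def shift_pow_Suc by (rule refl)

lemma Pe_0: "Pe s 0 a \<longleftrightarrow> s 0 < s a \<or> (s 0 = s a \<and> Pe (shift s) 0 a)"
proof -
  have "Pe s 0 a \<longleftrightarrow> lex_less s ((shift ^^ a) s)" by (simp add: Pe_def)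
  also have "\<dots> \<longleftrightarrow> s 0 < (shift ^^ a) s 0 \<or> (s 0 = (shift ^^ a) s 0 \<and> lex_less (shift s) (shift ((shift ^^ a) s)))"
    by (rule lex_less_rec)
  also have "\<dots> \<longleftrightarrow> s 0 < s a \<or> (s 0 = s a \<and> Pe (shift s) 0 a)"
    by (simp add: Pe_def shift_pow_app shift_comm)
  finally show ?thesis .
qed

lemma sym_a: assumes s: "s \<in> goodS" and a: "1 \<le> a"
  shows "Pe (shift s) (a - 1) a \<longleftrightarrow> s a = 0"
proof -
  have sa: "(shift ^^ a) s \<in> goodS" by (rule goodS_shift[OF s])
  have "Pe (shift s) (a - 1) a \<longleftrightarrow> lex_less ((shift ^^ a) s) (shift ((shift ^^ a) s))"
  proof -
    obtain a' where a': "a = Suc a'" using a by (cases a) auto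
    have "(shift ^^ (a - 1)) (shift s) = (shift ^^ a) s" unfolding a' by (simp only: diff_Suc_1 shift_pow_Suc)
    moreover have "(shift ^^ a) (shift s) = shift ((shift ^^ a) s)" by (simp add: shift_comm)
    ultimately show ?thesis by (simp add: Pe_def)
  qed
  also have "\<dots> \<longleftrightarrow> (shift ^^ a) s 0 = 0" by (rule goodS_first[OF sa])
  finally show ?thesis by (simp add: shift_pow_app)
qed

lemma Peq_step:
  assumes s: "s \<in> goodS" and t: "t \<in> goodS" and s0: "s 0 = t 0" and P: "Peq (shift s) (shift t)"
  shows "Peq s t"
  unfolding Peq_def
proof (intro allI impI)
  fix b a assume ba: "b < a" "a \<le> d"
  show "Pe s b a \<longleftrightarrow> Pe t b a"
  proof (cases b)
    case (Suc b')
    then obtain a' where a': "a = Suc a'" using ba by (cases a) auto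
    have "b' < a'" "a' \<le> d" using ba Suc a' by auto
    then have "Pe (shift s) b' a' \<longleftrightarrow> Pe (shift t) b' a'" using P unfolding Peq_def by blast
    then show ?thesis unfolding Suc a' Pe_Suc .
  next
    case 0
    have a1: "1 \<le> a" using ba 0 by simp
    have "a - 1 < a" "a \<le> d" using a1 ba by auto
    then have "Pe (shift s) (a - 1) a \<longleftrightarrow> Pe (shift t) (a - 1) a" using P unfolding Peq_def by blast
    then have "s a = 0 \<longleftrightarrow> t a = 0" using sym_a[OF s a1] sym_a[OF t a1] by simp
    moreover have "s a \<le> 1" "t a \<le> 1" using goodS_bin s t by auto
    ultimately have sa: "s a = t a" by auto
    have "0 < a" "a \<le> d" using a1 ba by auto
    then have Ps: "Pe (shift s) 0 a \<longleftrightarrow> Pe (shift t) 0 a" using P unfolding Peq_def by blast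
    have A: "Pe s 0 a \<longleftrightarrow> s 0 < s a \<or> (s 0 = s a \<and> Pe (shift s) 0 a)" by (rule Pe_0)
    have B: "Pe t 0 a \<longleftrightarrow> t 0 < t a \<or> (t 0 = t a \<and> Pe (shift t) 0 a)" by (rule Pe_0)
    show ?thesis unfolding 0 by (simp only: A B s0 sa Ps)
  qed
qed

lemma G_first:
  assumes pi: "\<pi> \<in> patterns d" and s: "s \<in> ordinal_set M X d \<pi>" "s \<in> goodS"
    and t: "t \<in> ordinal_set M X d \<pi>" "t \<in> goodS"
  shows "s 0 = t 0"
proof -
  have "Peq s t" by (rule G_Peq[OF pi s(1) t(1)])
  then have "Pe s 0 1 \<longleftrightarrow> Pe t 0 1" using d1 unfolding Peq_def by auto
  then have "s 0 = 0 \<longleftrightarrow> t 0 = 0" using goodS_first[OF s(2)] goodS_first[OF t(2)] by (simp add: Pe_def)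
  moreover have "s 0 \<le> 1" "t 0 \<le> 1" using goodS_bin s t by auto
  ultimately show ?thesis by auto
qed

end

context lshift
begin

lemma X_shift_meas[measurable]: "(\<lambda>s. X ((shift ^^ j) s)) \<in> borel_measurable M"
  by (rule measurable_compose[OF shift_pow_meas Xm])

lemma G_sets[measurable]: "ordinal_set M X d \<pi> \<in> sets M"
proof -
  define f where "f k s = X ((shift ^^ (d - \<pi> ! k)) s)" for k s
  define S where "S k = {s \<in> space M. f k s \<le> f (k - 1) s \<and> (f (k - 1) s = f k s \<longrightarrow> \<pi> ! k < \<pi> ! (k - 1))}" for k
  have Ssets: "S k \<in> sets M" for k
  proof (cases "\<pi> ! k < \<pi> ! (k - 1)")
    case True
    then have "S k = {s \<in> space M. f k s \<le> f (k - 1) s}" unfolding S_def by auto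
    also have "\<dots> \<in> sets M" unfolding f_def by (rule borel_measurable_le) (rule X_shift_meas)+
    finally show ?thesis .
  next
    case False
    then have "S k = {s \<in> space M. f k s < f (k - 1) s}" unfolding S_def by auto
    also have "\<dots> \<in> sets M" unfolding f_def by (rule borel_measurable_less) (rule X_shift_meas)+
    finally show ?thesis .
  qed
  have eq: "ordinal_set M X d \<pi> = space M \<inter> (\<Inter>k\<in>{0<..<length \<pi>}. S k)"
    unfolding ordinal_set_def has_pattern_def S_def f_def by auto
  show ?thesis
  proof (cases "{0<..<length \<pi>} = {}")
    case True then show ?thesis unfolding eq by simp
  next
    case False
    have "(\<Inter>k\<in>{0<..<length \<pi>}. S k) \<in> sets M"
      using False Ssets by (intro sets.finite_INT) auto
    then show ?thesis unfolding eq by (intro sets.Int sets.top)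
  qed
qed

lemma neq_sets: "{s \<in> space M. s i \<noteq> s (Suc i)} \<in> sets M"
proof -
  have "{s \<in> space M. s i \<noteq> s (Suc i)} =
     ({s \<in> space M. s i = 0} \<inter> {s \<in> space M. s (Suc i) = 1}) \<union> ({s \<in> space M. s i = 1} \<inter> {s \<in> space M. s (Suc i) = 0})"
  proof (intro equalityI subsetI)
    fix s assume s: "s \<in> {s \<in> space M. s i \<noteq> s (Suc i)}"
    then have "s i \<le> 1" "s (Suc i) \<le> 1" "s \<in> space M" "s i \<noteq> s (Suc i)" using space_bin by auto
    then have "(s i = 0 \<and> s (Suc i) = 1) \<or> (s i = 1 \<and> s (Suc i) = 0)" by auto
    then show "s \<in> ({s \<in> space M. s i = 0} \<inter> {s \<in> space M. s (Suc i) = 1}) \<union> ({s \<in> space M. s i = 1} \<inter> {s \<in> space M. s (Suc i) = 0})"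
      using \<open>s \<in> space M\<close> by blast
  qed auto
  also have "\<dots> \<in> sets M" by (intro sets.Un sets.Int coord_sets)
  finally show ?thesis .
qed

lemma goodS_sets[measurable]: "goodS \<in> sets M"
proof -
  have "goodS = space M \<inter> (\<Inter>k. \<Union>i\<in>{k..}. {s \<in> space M. s i \<noteq> s (Suc i)})"
    unfolding goodS_def by auto
  also have "\<dots> \<in> sets M"
    using neq_sets by (intro sets.Int sets.top sets.countable_INT sets.countable_UN) auto
  finally show ?thesis .
qed

lemma Qdiag: "c \<le> 1 \<Longrightarrow> Q c c < 1"
  by (rule ergodic_Qdiag[OF erg])

lemma goodS_compl_null: "space M - goodS \<in> null_sets M"
proof -
  define N where "N k c = (shift ^^ k) -` Zinf c \<inter> space M" for k c
  have Nnull: "N k c \<in> null_sets M" if c: "c \<le> 1" for k c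
  proof -
    have "N k c \<in> sets M" unfolding N_def by measurable
    moreover have "measure M (N k c) = 0"
      unfolding N_def using shift_invariant[OF Zinf_sets[of c], of k] Zinf_null[OF c Qdiag[OF c]] by simp
    ultimately show ?thesis by (simp add: emeasure_eq_measure null_sets_def)
  qed
  have sub: "space M - goodS \<subseteq> (\<Union>k. N k 0 \<union> N k 1)"
  proof
    fix s assume s: "s \<in> space M - goodS"
    then obtain k where k: "\<forall>i\<ge>k. s i = s (Suc i)" unfolding goodS_def by auto
    have eq: "s (j + k) = s k" for j
    proof (induction j)
      case (Suc j)
      have "s (Suc j + k) = s (Suc (j + k))" by simp
      also have "\<dots> = s (j + k)" using k by (metis le_add2)
      finally show ?case using Suc by simp
    qed simp
    have "s k \<le> 1" using s space_bin by auto
    then have "s k = 0 \<or> s k = 1" by auto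
    moreover have "(shift ^^ k) s \<in> Zinf (s k)" using s eq shift_space by (auto simp: Zinf_def shift_pow_app)
    ultimately show "s \<in> (\<Union>k. N k 0 \<union> N k 1)" using s unfolding N_def by auto
  qed
  have nU: "(\<Union>k. N k 0 \<union> N k 1) \<in> null_sets M" using Nnull by auto
  have "space M - goodS \<in> sets M" by (intro sets.Diff sets.top goodS_sets)
  then show ?thesis by (rule null_sets_subset[OF nU _ sub])
qed

lemma meas_goodS: "A \<in> sets M \<Longrightarrow> measure M (A \<inter> goodS) = measure M A"
proof -
  assume A: "A \<in> sets M"
  then have "A \<inter> goodS = A - (space M - goodS)" using sets.sets_into_space by blast
  then show ?thesis using measure_Diff_null_set[OF A goodS_compl_null] by simp
qed

lemma null_outside: "A \<in> sets M \<Longrightarrow> A \<subseteq> space M - goodS \<Longrightarrow> measure M A = 0"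
  using null_sets_subset[OF goodS_compl_null] measure_eq_0_null_sets by blast

end

context lshift
begin

abbreviation GG where "GG \<equiv> ordinal_set M X d"

definition Bs :: "(nat \<Rightarrow> nat list) \<Rightarrow> nat \<Rightarrow> (nat \<Rightarrow> nat) set" where
  "Bs ix m = (\<Inter>k\<le>m. (shift ^^ k) -` GG (ix k) \<inter> space M)"

lemma Bs_mem: "t \<in> Bs ix m \<longleftrightarrow> t \<in> space M \<and> (\<forall>k\<le>m. (shift ^^ k) t \<in> GG (ix k))"
  unfolding Bs_def by auto

lemma Bs_sets: "Bs ix m \<in> sets M"
  unfolding Bs_def by (intro sets.finite_INT) auto

lemma G_sub: "GG \<pi> \<subseteq> space M" by (auto simp: ordinal_set_def)

lemma KS2:
  assumes ix: "\<And>k. k \<le> m \<Longrightarrow> ix k \<in> patterns d"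
    and s: "s \<in> Bs ix m" "s \<in> goodS" and t: "t \<in> goodS"
    and ts: "\<And>i. i < m \<Longrightarrow> t i = s i" and tm: "(shift ^^ m) t \<in> GG (ix m)"
  shows "t \<in> Bs ix m"
proof -
  have sG: "(shift ^^ k) s \<in> GG (ix k)" if "k \<le> m" for k using s(1) that unfolding Bs_mem by blast
  have claim: "Peq ((shift ^^ (m - j)) t) ((shift ^^ (m - j)) s)" if "j \<le> m" for j
    using that
  proof (induction j)
    case 0 then show ?case using G_Peq[OF ix[of m] _ sG[of m]] tm by simp
  next
    case (Suc j)
    define k where "k = m - Suc j"
    have km: "k < m" "m - j = Suc k" using Suc.prems unfolding k_def by auto
    have IH: "Peq ((shift ^^ Suc k) t) ((shift ^^ Suc k) s)" using Suc km by simp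
    have e1: "(shift ^^ Suc k) t = shift ((shift ^^ k) t)" "(shift ^^ Suc k) s = shift ((shift ^^ k) s)"
      by simp_all
    have "Peq ((shift ^^ k) t) ((shift ^^ k) s)"
    proof (rule Peq_step)
      show "(shift ^^ k) t \<in> goodS" "(shift ^^ k) s \<in> goodS" using goodS_shift t s(2) by auto
      show "(shift ^^ k) t 0 = (shift ^^ k) s 0" using ts[OF km(1)] by (simp add: shift_pow_app)
      show "Peq (shift ((shift ^^ k) t)) (shift ((shift ^^ k) s))" using IH unfolding e1 .
    qed
    then show ?case unfolding k_def by simp
  qed
  have "(shift ^^ k) t \<in> GG (ix k)" if k: "k \<le> m" for k
  proof -
    have "Peq ((shift ^^ k) t) ((shift ^^ k) s)" using claim[of "m - k"] k by simp
    moreover have "(shift ^^ k) t \<in> space M" "(shift ^^ k) s \<in> space M"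
      using goodS_shift goodS_space t s(2) by auto
    ultimately show ?thesis using G_cong[OF ix[OF k]] sG[OF k] by blast
  qed
  then show ?thesis unfolding Bs_mem using goodS_space[OF t] by blast
qed

lemma KS1:
  assumes ix: "\<And>k. k \<le> m \<Longrightarrow> ix k \<in> patterns d"
    and s: "s \<in> Bs ix m" "s \<in> goodS" and t: "t \<in> Bs ix m" "t \<in> goodS" and i: "i \<le> m"
  shows "t i = s i"
proof -
  have "(shift ^^ i) t \<in> GG (ix i)" "(shift ^^ i) s \<in> GG (ix i)" using s t i unfolding Bs_mem by blast+
  moreover have "(shift ^^ i) t \<in> goodS" "(shift ^^ i) s \<in> goodS" using goodS_shift s t by auto
  ultimately have "(shift ^^ i) t 0 = (shift ^^ i) s 0" using G_first[OF ix[OF i]] by blast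
  then show ?thesis by (simp add: shift_pow_app)
qed

lemma KM:
  assumes ix: "\<And>k. k \<le> m \<Longrightarrow> ix k \<in> patterns d"
    and s: "s \<in> Bs ix m" "s \<in> goodS"
  shows "measure M (Bs ix m) * p (s m) = measure M (cylinder 1 s (Suc m)) * measure M (GG (ix m))"
proof -
  define E where "E = GG (ix m) \<inter> goodS"
  have Esets: "E \<in> sets M" unfolding E_def by (intro sets.Int G_sets goodS_sets)
  have smG: "(shift ^^ m) s \<in> GG (ix m)" "(shift ^^ m) s \<in> goodS"
    using s goodS_shift by (simp_all add: Bs_mem)
  have seteq: "Bs ix m \<inter> goodS = cylinder 1 s (Suc m) \<inter> ((shift ^^ m) -` E \<inter> space M)"
  proof (intro equalityI subsetI)
    fix t assume t: "t \<in> Bs ix m \<inter> goodS"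
    have "t i = s i" if "i < Suc m" for i using KS1[OF ix s, of t i] t that by auto
    moreover have "(shift ^^ m) t \<in> GG (ix m)" "t \<in> space M"
      using t by (simp_all add: Bs_mem)
    moreover have "(shift ^^ m) t \<in> goodS" using t goodS_shift by blast
    ultimately show "t \<in> cylinder 1 s (Suc m) \<inter> ((shift ^^ m) -` E \<inter> space M)"
      unfolding E_def cylinder_def by (auto simp: space_eq)
  next
    fix t assume t: "t \<in> cylinder 1 s (Suc m) \<inter> ((shift ^^ m) -` E \<inter> space M)"
    then have tsp: "t \<in> space M" and tm: "(shift ^^ m) t \<in> GG (ix m)" "(shift ^^ m) t \<in> goodS"
      and ts: "\<And>i. i < Suc m \<Longrightarrow> t i = s i"
      unfolding E_def cylinder_def by (auto simp: space_eq)
    have tg: "t \<in> goodS" by (rule goodS_shift_rev[OF tsp tm(2)])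
    have "t \<in> Bs ix m" by (rule KS2[OF ix s tg _ tm(1)]) (use ts in auto)
    then show "t \<in> Bs ix m \<inter> goodS" using tg by blast
  qed
  have s1: "\<And>i. i \<le> m \<Longrightarrow> s i \<le> 1" using s(2) goodS_bin by auto
  have mk: "measure M (cylinder 1 s (Suc m) \<inter> ((shift ^^ m) -` E \<inter> space M)) * p (s m) =
      measure M (cylinder 1 s (Suc m)) * measure M (cylinder 1 (\<lambda>_. s m) 1 \<inter> E)"
    by (rule markov_cyl[OF s1 Esets])
  have ZE: "cylinder 1 (\<lambda>_. s m) 1 \<inter> E = E"
  proof -
    have "u 0 = s m" if u: "u \<in> E" for u
    proof -
      have "u 0 = (shift ^^ m) s 0"
        using G_first[OF ix[of m]] u smG unfolding E_def by blast
      then show ?thesis by (simp add: shift_pow_app)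
    qed
    then show ?thesis unfolding E_def cylinder_def using G_sub goodS_space by (auto simp: space_eq)
  qed
  have "measure M (Bs ix m) = measure M (Bs ix m \<inter> goodS)" using meas_goodS[OF Bs_sets] by simp
  moreover have "measure M E = measure M (GG (ix m))" unfolding E_def by (rule meas_goodS[OF G_sets])
  ultimately show ?thesis using mk unfolding seteq ZE by simp
qed

end

context lshift
begin

lemma Bs_Suc: "Bs ix (Suc m) = Bs ix m \<inter> ((shift ^^ Suc m) -` GG (ix (Suc m)) \<inter> space M)"
  unfolding Bs_def by (simp add: atMost_Suc Int_commute Int_left_commute)

lemma markov: "markov_property M (patterns d) GG"
  unfolding markov_property_def
proof (intro allI impI)
  fix n :: nat and ix :: "nat \<Rightarrow> nat list"
  assume n1: "1 \<le> n" and ixp: "\<forall>k\<le>n. ix k \<in> patterns d"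
    and pos: "0 < measure M (\<Inter>k<n. (shift ^^ k) -` GG (ix k) \<inter> space M)"
  obtain m where nm: "n = Suc m" using n1 by (cases n) auto
  have L1: "(\<Inter>k<n. (shift ^^ k) -` GG (ix k) \<inter> space M) = Bs ix m"
    unfolding Bs_def nm lessThan_Suc_atMost ..
  have L2: "(\<Inter>k\<le>n. (shift ^^ k) -` GG (ix k) \<inter> space M) = Bs ix n"
    unfolding Bs_def ..
  have nm1: "n - 1 = m" using nm by simp
  have ixn: "\<And>k. k \<le> n \<Longrightarrow> ix k \<in> patterns d" using ixp by blast
  have ixm: "\<And>k. k \<le> m \<Longrightarrow> ix k \<in> patterns d" using ixp nm by auto
  have posm: "0 < measure M (Bs ix m)" using pos L1 by simp
  define R where "R = GG (ix m) \<inter> (shift -` GG (ix n) \<inter> space M)"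
  have Rsets: "R \<in> sets M" unfolding R_def by measurable
  have Bn: "Bs ix n = Bs ix m \<inter> ((shift ^^ n) -` GG (ix n) \<inter> space M)" unfolding nm by (rule Bs_Suc)
  show "measure M (\<Inter>k\<le>n. (shift ^^ k) -` GG (ix k) \<inter> space M) /
          measure M (\<Inter>k<n. (shift ^^ k) -` GG (ix k) \<inter> space M) =
        measure M (GG (ix (n - 1)) \<inter> (shift -` GG (ix n) \<inter> space M)) / measure M (GG (ix (n - 1)))"
  proof (cases "\<exists>s'. s' \<in> Bs ix n \<and> s' \<in> goodS")
    case True
    then obtain s' where s': "s' \<in> Bs ix n" "s' \<in> goodS" by blast
    have s'm: "s' \<in> Bs ix m" using s' Bn by blast
    have KMn: "measure M (Bs ix n) * p (s' n) = measure M (cylinder 1 s' (Suc n)) * measure M (GG (ix n))"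
      by (rule KM[OF ixn s'])
    have KMm: "measure M (Bs ix m) * p (s' m) = measure M (cylinder 1 s' (Suc m)) * measure M (GG (ix m))"
      by (rule KM[OF ixm s'm s'(2)])
    define ix' where "ix' k = ix (m + k)" for k
    define u where "u = (shift ^^ m) s'"
    have ix': "\<And>k. k \<le> 1 \<Longrightarrow> ix' k \<in> patterns d" unfolding ix'_def using ixn nm by auto
    have ug: "u \<in> goodS" unfolding u_def using goodS_shift s'(2) by blast
    have s'sp: "s' \<in> space M" using s'(2) goodS_space by blast
    have uB: "u \<in> Bs ix' 1"
      unfolding Bs_mem
    proof (intro conjI allI impI)
      show "u \<in> space M" using ug goodS_space by blast
      fix k :: nat assume k: "k \<le> 1"
      have "(shift ^^ k) u = (shift ^^ (m + k)) s'" unfolding u_def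
        by (simp add: shift_pow_add[symmetric] add.commute)
      moreover have "(shift ^^ (m + k)) s' \<in> GG (ix (m + k))"
        using s'(1) k nm unfolding Bs_mem by auto
      ultimately show "(shift ^^ k) u \<in> GG (ix' k)" unfolding ix'_def by simp
    qed
    have BR: "Bs ix' 1 = R"
      unfolding Bs_def R_def ix'_def using G_sub[of "ix m"]
      by (auto simp: atMost_Suc nm)
    have KMR: "measure M R * p (u 1) = measure M (cylinder 1 u (Suc 1)) * measure M (GG (ix' 1))"
      using KM[OF ix' uB ug] unfolding BR .
    have u01: "u 0 = s' m" "u 1 = s' n" unfolding u_def using nm by (simp_all add: shift_pow_app)
    have bin: "\<And>i. s' i \<le> 1" using s'(2) goodS_bin by blast
    have cu: "measure M (cylinder 1 u (Suc 1)) = p (s' m) * Q (s' m) (s' n)"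
      using cyl_meas[of "Suc 1" u] bin u01 unfolding u_def by (simp add: shift_pow_app)
    have cn: "measure M (cylinder 1 s' (Suc n)) = measure M (cylinder 1 s' (Suc m)) * Q (s' m) (s' n)"
      using cyl_meas[of "Suc n" s'] cyl_meas[of "Suc m" s'] bin nm by simp
    have gn: "GG (ix' 1) = GG (ix n)" unfolding ix'_def using nm by simp
    define a where "a = measure M (Bs ix m)"
    define b where "b = measure M (Bs ix n)"
    define C where "C = measure M (cylinder 1 s' (Suc m))"
    define q where "q = Q (s' m) (s' n)"
    define pm where "pm = p (s' m)"
    define pn where "pn = p (s' n)"
    define gm where "gm = measure M (GG (ix m))"
    define gn' where "gn' = measure M (GG (ix n))"
    define r where "r = measure M R"
    have e1: "b * pn = C * q * gn'" using KMn cn unfolding b_def pn_def C_def q_def gn'_def by simp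
    have e2: "a * pm = C * gm" using KMm unfolding a_def pm_def C_def gm_def by simp
    have e3: "r * pn = pm * q * gn'" using KMR cu u01 gn unfolding r_def pn_def pm_def q_def gn'_def by simp
    have pmp: "pm > 0" "pn > 0" unfolding pm_def pn_def using ppos bin by auto
    have ap: "a > 0" using posm unfolding a_def .
    have "a * pm > 0" using ap pmp by simp
    then have "C * gm > 0" using e2 by simp
    then have nz: "C \<noteq> 0" "gm \<noteq> 0" by auto
    have "b / a = r / gm"
    proof -
      have b: "b = C * q * gn' / pn" using e1 pmp by (simp add: field_simps)
      have a: "a = C * gm / pm" using e2 pmp by (simp add: field_simps)
      have r: "r = pm * q * gn' / pn" using e3 pmp by (simp add: field_simps)
      show ?thesis unfolding a b r using nz pmp by (simp add: field_simps)
    qed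
    then show ?thesis unfolding L1 L2 nm1 R_def[symmetric] a_def b_def r_def gm_def .
  next
    case False
    have "Bs ix n \<subseteq> space M - goodS"
    proof
      fix x assume "x \<in> Bs ix n"
      moreover then have "x \<in> space M" by (simp add: Bs_mem)
      ultimately show "x \<in> space M - goodS" using False by blast
    qed
    then have b0: "measure M (Bs ix n) = 0" by (rule null_outside[OF Bs_sets])
    have "R \<subseteq> space M - goodS"
    proof
      fix t assume tR: "t \<in> R"
      show "t \<in> space M - goodS"
      proof (rule ccontr)
        assume "t \<notin> space M - goodS"
        then have tg: "t \<in> goodS" using tR G_sub unfolding R_def by blast
        have "\<exists>s. s \<in> Bs ix m \<and> s \<in> goodS"
        proof (rule ccontr)
          assume "\<nexists>s. s \<in> Bs ix m \<and> s \<in> goodS"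
          have "Bs ix m \<subseteq> space M - goodS"
          proof
            fix x assume "x \<in> Bs ix m"
            moreover then have "x \<in> space M" by (simp add: Bs_mem)
            ultimately show "x \<in> space M - goodS" using \<open>\<nexists>s. s \<in> Bs ix m \<and> s \<in> goodS\<close> by blast
          qed
          then have "measure M (Bs ix m) = 0" by (rule null_outside[OF Bs_sets])
          then show False using posm by simp
        qed
        then obtain s where s: "s \<in> Bs ix m" "s \<in> goodS" by blast
        define u where "u i = (if i < m then s i else t (i - m))" for i
        have um: "(shift ^^ m) u = t" by (rule ext) (simp add: shift_pow_app u_def)
        have usp: "u \<in> space M" using s(2) tg goodS_bin by (simp add: space_eq seq_space_def u_def)
        have ug: "u \<in> goodS" using goodS_shift_rev[OF usp, of m] tg um by simp
        have tG: "t \<in> GG (ix m)" "shift t \<in> GG (ix n)" using tR unfolding R_def by auto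
        have uB: "u \<in> Bs ix m"
          by (rule KS2[OF ixm s ug]) (use um tG in \<open>auto simp: u_def\<close>)
        have "(shift ^^ n) u = shift t" unfolding nm using um by simp
        then have "u \<in> Bs ix n" using uB tG usp Bn by simp
        then show False using False ug by blast
      qed
    qed
    then have r0: "measure M R = 0" using Rsets by (intro null_outside) auto
    show ?thesis unfolding L1 L2 nm1 R_def[symmetric] b0 r0 by simp
  qed
qed

end

context lshift
begin

definition Hc :: "nat \<Rightarrow> (nat \<Rightarrow> nat) set" where
  "Hc c = (\<Union>\<pi>\<in>{\<pi> \<in> patterns d. \<exists>u\<in>GG \<pi> \<inter> goodS. u 0 = c}. GG \<pi>)"

lemma Hc_iff:
  assumes t: "t \<in> goodS"
  shows "t \<in> Hc c \<longleftrightarrow> t 0 = c"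
proof
  assume "t \<in> Hc c"
  then obtain \<pi> u where pi: "\<pi> \<in> patterns d" "u \<in> GG \<pi>" "u \<in> goodS" "u 0 = c" "t \<in> GG \<pi>"
    unfolding Hc_def by blast
  then show "t 0 = c" using G_first[OF pi(1) pi(5) t pi(2) pi(3)] by simp
next
  assume t0: "t 0 = c"
  obtain \<pi> where pi: "\<pi> \<in> patterns d" "has_pattern (\<lambda>i. X ((shift ^^ (d - i)) t)) \<pi>"
    using pattern_exists by blast
  have "t \<in> GG \<pi>" using pi goodS_space[OF t] by (simp add: inG)
  then show "t \<in> Hc c" unfolding Hc_def using pi(1) t t0 by blast
qed

lemma generating: "generating M (patterns d) GG"
proof -
  define Gen where "Gen = {(shift ^^ n) -` GG i \<inter> space M | n i. i \<in> patterns d}"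
  define SG where "SG = sigma_sets (space M) Gen"
  have Gen_sub: "Gen \<subseteq> Pow (space M)" unfolding Gen_def by auto
  interpret S: sigma_algebra "space M" SG unfolding SG_def by (rule sigma_algebra_sigma_sets[OF Gen_sub])
  have Gen_sets: "Gen \<subseteq> sets M" unfolding Gen_def by auto
  have SG_sets: "SG \<subseteq> sets M" unfolding SG_def by (rule sets.sigma_sets_subset[OF Gen_sets])
  have preH: "(shift ^^ i) -` Hc c \<inter> space M \<in> SG" for i c
  proof -
    define P where "P = {\<pi> \<in> patterns d. \<exists>u\<in>GG \<pi> \<inter> goodS. u 0 = c}"
    have "(shift ^^ i) -` Hc c \<inter> space M = (\<Union>\<pi>\<in>P. (shift ^^ i) -` GG \<pi> \<inter> space M)"
      unfolding Hc_def P_def by auto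
    also have "\<dots> \<in> SG"
    proof (rule S.finite_UN)
      show "finite P" unfolding P_def using finite_patterns by simp
      fix \<pi> assume "\<pi> \<in> P"
      then have "(shift ^^ i) -` GG \<pi> \<inter> space M \<in> Gen" unfolding P_def Gen_def by blast
      then show "(shift ^^ i) -` GG \<pi> \<inter> space M \<in> SG" unfolding SG_def by blast
    qed
    finally show ?thesis .
  qed
  have claim: "\<exists>A\<in>SG. A - B \<subseteq> space M - goodS \<and> B - A \<subseteq> space M - goodS"
    if B: "B \<in> sigma_sets (seq_space 1) {cylinder 1 a n | a n. True}" for B
    using B
  proof (induction rule: sigma_sets.induct)
    case (Basic B)
    then obtain a n where Bc: "B = cylinder 1 a n" by blast
    have Bsp: "B \<subseteq> space M" unfolding Bc space_eq by (rule cyl_sub)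
    show ?case
    proof (cases "n = 0")
      case True
      then have "B = space M" unfolding Bc by (auto simp: cylinder_def space_eq)
      then show ?thesis using S.top by blast
    next
      case False
      define A where "A = (\<Inter>i\<in>{..<n}. (shift ^^ i) -` Hc (a i) \<inter> space M)"
      have ASG: "A \<in> SG" unfolding A_def using False preH by (intro S.finite_INT) auto
      have Asp: "A \<subseteq> space M" unfolding A_def using False by auto
      have eq: "t \<in> A \<longleftrightarrow> t \<in> B" if t: "t \<in> goodS" for t
      proof -
        have "t \<in> A \<longleftrightarrow> (\<forall>i<n. (shift ^^ i) t \<in> Hc (a i))"
          unfolding A_def using goodS_space[OF t] by auto
        also have "\<dots> \<longleftrightarrow> (\<forall>i<n. t i = a i)"
          using Hc_iff goodS_shift[OF t] by (simp add: shift_pow_app)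
        also have "\<dots> \<longleftrightarrow> t \<in> B" unfolding Bc cylinder_def using goodS_space[OF t] by (simp add: space_eq)
        finally show ?thesis .
      qed
      show ?thesis using ASG Asp Bsp eq by (intro bexI[of _ A]) auto
    qed
  next
    case Empty
    show ?case using S.empty_sets by blast
  next
    case (Compl B)
    then obtain A where A: "A \<in> SG" "A - B \<subseteq> space M - goodS" "B - A \<subseteq> space M - goodS" by blast
    have "space M - A \<in> SG" using A(1) by blast
    moreover have "(space M - A) - (seq_space 1 - B) \<subseteq> space M - goodS"
      "(seq_space 1 - B) - (space M - A) \<subseteq> space M - goodS"
      using A(2,3) S.sets_into_space[OF A(1)] by (auto simp: space_eq)
    ultimately show ?case by blast
  next
    case (Union B)
    then have "\<forall>i. \<exists>A\<in>SG. A - B i \<subseteq> space M - goodS \<and> B i - A \<subseteq> space M - goodS" by blast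
    then obtain f where f: "\<And>i. f i \<in> SG" "\<And>i. f i - B i \<subseteq> space M - goodS" "\<And>i. B i - f i \<subseteq> space M - goodS"
      by metis
    have "(\<Union>i. f i) \<in> SG" using f(1) by blast
    moreover have "(\<Union>i. f i) - (\<Union>i. B i) \<subseteq> space M - goodS" using f(2) by blast
    moreover have "(\<Union>i. B i) - (\<Union>i. f i) \<subseteq> space M - goodS" using f(3) by blast
    ultimately show ?case by blast
  qed
  show ?thesis unfolding generating_def
  proof
    fix B assume B: "B \<in> sets M"
    then obtain A where A: "A \<in> SG" "A - B \<subseteq> space M - goodS" "B - A \<subseteq> space M - goodS"
      using claim sets_eq by blast
    have "(A - B) \<union> (B - A) \<in> sets M" using A(1) SG_sets B by blast
    then have "measure M ((A - B) \<union> (B - A)) = 0" using A(2,3) by (intro null_outside) auto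
    then show "\<exists>A\<in>sigma_sets (space M) {(shift ^^ n) -` GG i \<inter> space M | n i. i \<in> patterns d}.
        measure M ((A - B) \<union> (B - A)) = 0" using A(1) unfolding SG_def Gen_def by blast
  qed
qed

end

theorem lemma2:
  fixes Q :: "nat \<Rightarrow> nat \<Rightarrow> real" and p :: "nat \<Rightarrow> real"
    and M :: "(nat \<Rightarrow> nat) measure" and X :: "(nat \<Rightarrow> nat) \<Rightarrow> real" and d :: nat
  assumes "markov_shift 1 Q p M"
    and "ergodic_shift M"
    and "X \<in> borel_measurable M"
    and "lexicographic_like M X"
    and "1 \<le> d"
  shows "generating M (patterns d) (ordinal_set M X d) \<and>
         markov_property M (patterns d) (ordinal_set M X d)"
proof -
  interpret lshift Q p M X d
    using assms by (unfold_locales) auto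
  show ?thesis using generating markov by blast
qed


end
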